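(* Let $\varepsilon,\delta,s>0$ with $0<4\delta s\le\varepsilon^2$. Let $\tilde u:\mathbb R\to\mathbb R$ be a smooth monotone function satisfying \[ \Big(\frac{\tilde u^2}{2}\Big)'=\varepsilon\tilde u''-\delta\tilde u''',\qquad \tilde u(x)\to \mp s,\ \ \tilde u'(x)\to0\ \text{ as }x\to\pm\infty . \] Then, with $\underline\lambda=\sqrt2-1$ and $\bar\lambda=1$, \[ \underline\lambda\,(s-\tilde u(x))(\tilde u(x)+s)\le-\varepsilon\tilde u'(x)\le\bar\lambda\,(s-\tilde u(x))(\tilde u(x)+s)\qquad\forall x\in\mathbb R . \]
   Context: Here $\tilde u$ is the (stationary, speed $\sigma=0$) viscous-dispersive shock profile of the KdV--Burgers equation $u_t+(u^2/2)_x=\varepsilon u_{xx}-\delta u_{xxx}$ connecting $u_-=s$ to $u_+=-s$. *)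

theory Defs
  imports "HOL-Analysis.Analysis"
begin

definition smooth_fun :: "(real \<Rightarrow> real) \<Rightarrow> bool" where
  "smooth_fun f \<longleftrightarrow> (\<forall>n x. ((deriv ^^ n) f) differentiable (at x))"

end

theory Submission
  imports Defs
begin

lemma antideriv_ex:
  fixes a :: "real \<Rightarrow> real"
  assumes "\<And>x. isCont a x"
  shows "\<exists>A. \<forall>x. (A has_real_derivative a x) (at x)"
proof -
  obtain F where F: "\<forall>x::real. -\<infinity> < ereal x \<longrightarrow> ereal x < \<infinity> \<longrightarrow> (F has_vector_derivative a x) (at x)"
    using einterval_antiderivative[of "-\<infinity>" "\<infinity>" a] assms by auto
  then show ?thesis
    by (auto simp: has_real_derivative_iff_has_vector_derivative)
qed

lemma key_neg:
  fixes G G' a A :: "real \<Rightarrow> real"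
  assumes dG: "\<And>x. (G has_real_derivative G' x) (at x)"
    and dA: "\<And>x. (A has_real_derivative a x) (at x)"
    and apos: "\<And>x. a x \<ge> 0"
    and b: "\<And>x. G' x - a x * G x \<ge> 0"
    and lim: "(G \<longlongrightarrow> 0) at_top"
  shows "G x \<le> 0"
proof -
  define P where "P y = G y * exp (- A y)" for y
  have dP: "(P has_real_derivative (G' y - a y * G y) * exp (- A y)) (at y)" for y
    unfolding P_def
    by (rule derivative_eq_intros dG dA refl | simp add: algebra_simps)+
  have Pmono: "P x \<le> P y" if "x \<le> y" for x y
    by (rule DERIV_nonneg_imp_nondecreasing[OF that]) (use dP b in \<open>auto intro!: exI\<close>)
  have Amono: "A 0 \<le> A y" if "0 \<le> y" for y
    by (rule DERIV_nonneg_imp_nondecreasing[OF that]) (use dA apos in \<open>auto intro!: exI\<close>)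
  have "(P \<longlongrightarrow> 0) at_top"
  proof (rule Lim_null_comparison)
    show "\<forall>\<^sub>F y in at_top. norm (P y) \<le> \<bar>G y\<bar> * exp (- A 0)"
      using eventually_ge_at_top[of "0::real"]
    proof eventually_elim
      case (elim y)
      then show ?case using Amono[OF elim]
        by (auto simp: P_def abs_mult intro!: mult_left_mono)
    qed
    show "((\<lambda>y. \<bar>G y\<bar> * exp (- A 0)) \<longlongrightarrow> 0) at_top"
      using tendsto_mult_left_zero[OF tendsto_rabs_zero[OF lim], of "exp (- A 0)"] by simp
  qed
  moreover have "\<forall>\<^sub>F y in at_top. P x \<le> P y"
    using eventually_ge_at_top[of x] by eventually_elim (rule Pmono)
  ultimately have "P x \<le> 0"
    using tendsto_le[of at_top P 0 "\<lambda>_. P x" "P x"] by auto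
  then show ?thesis by (simp add: P_def mult_le_0_iff)
qed


theorem lemma2p3:
  fixes \<epsilon> \<delta> s :: real and u :: "real \<Rightarrow> real"
  assumes "\<epsilon> > 0" and "\<delta> > 0" and "s > 0"
    and "4 * \<delta> * s \<le> \<epsilon>\<^sup>2"
    and "smooth_fun u"
    and "mono u \<or> antimono u"
    and "\<And>x. deriv (\<lambda>y. (u y)\<^sup>2 / 2) x
               = \<epsilon> * deriv (deriv u) x - \<delta> * deriv (deriv (deriv u)) x"
    and "(u \<longlongrightarrow> -s) at_top" and "(u \<longlongrightarrow> s) at_bot"
    and "(deriv u \<longlongrightarrow> 0) at_top" and "(deriv u \<longlongrightarrow> 0) at_bot"
  shows "\<forall>x. (sqrt 2 - 1) * (s - u x) * (u x + s) \<le> - \<epsilon> * deriv u x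
          \<and> - \<epsilon> * deriv u x \<le> 1 * (s - u x) * (u x + s)"
proof -
  note ep = assms(1) and de = assms(2) and sp = assms(3) and cond = assms(4)
  note ode = assms(7) and ut = assms(8) and ub = assms(9) and u1t = assms(10)
  define u1 where "u1 = deriv u"
  define u2 where "u2 = deriv u1"
  define u3 where "u3 = deriv u2"
  have sm: "\<And>n x. ((deriv ^^ n) u) differentiable (at x)"
    using assms(5) unfolding smooth_fun_def by blast
  have d1: "(u has_real_derivative u1 x) (at x)" for x
    using sm[of 0 x] by (simp add: u1_def DERIV_deriv_iff_real_differentiable)
  have d2: "(u1 has_real_derivative u2 x) (at x)" for x
    using sm[of 1 x] by (simp add: u1_def u2_def DERIV_deriv_iff_real_differentiable)
  have d3: "(u2 has_real_derivative u3 x) (at x)" for x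
    using sm[of 2 x] by (simp add: u1_def u2_def u3_def numeral_2_eq_2 DERIV_deriv_iff_real_differentiable)
  have bnd: "-s \<le> u x \<and> u x \<le> s" for x
  proof (cases "antimono u")
    case True
    have "\<forall>\<^sub>F y in at_top. u y \<le> u x"
      using eventually_ge_at_top[of x] by eventually_elim (use True in \<open>auto simp: antimono_def\<close>)
    then have 1: "-s \<le> u x" using tendsto_le[of at_top "\<lambda>_. u x" "u x" u "-s"] ut by auto
    have "\<forall>\<^sub>F y in at_bot. u x \<le> u y"
      using eventually_le_at_bot[of x] by eventually_elim (use True in \<open>auto simp: antimono_def\<close>)
    then have 2: "u x \<le> s" using tendsto_le[of at_bot u s "\<lambda>_. u x" "u x"] ub by auto
    show ?thesis using 1 2 by auto
  next
    case False
    then have M: "mono u" using assms(6) by auto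
    have "\<forall>\<^sub>F y in at_top. u x \<le> u y"
      using eventually_ge_at_top[of x] by eventually_elim (use M in \<open>auto simp: mono_def\<close>)
    then have 1: "u x \<le> -s" using tendsto_le[of at_top u "-s" "\<lambda>_. u x" "u x"] ut by auto
    have "\<forall>\<^sub>F y in at_bot. u y \<le> u x"
      using eventually_le_at_bot[of x] by eventually_elim (use M in \<open>auto simp: mono_def\<close>)
    then have 2: "s \<le> u x" using tendsto_le[of at_bot "\<lambda>_. u x" "u x" u s] ub by auto
    show ?thesis using 1 2 sp by auto
  qed
  have ode2: "u x * u1 x = \<epsilon> * u2 x - \<delta> * u3 x" for x
  proof -
    have "((\<lambda>y. (u y)\<^sup>2 / 2) has_real_derivative u x * u1 x) (at x)"
      by (rule derivative_eq_intros d1 refl | simp)+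
    then have "deriv (\<lambda>y. (u y)\<^sup>2 / 2) x = u x * u1 x" by (rule DERIV_imp_deriv)
    then show ?thesis using ode[of x] by (simp add: u1_def u2_def u3_def)
  qed
  define E where "E x = (u x)\<^sup>2 / 2 - \<epsilon> * u1 x + \<delta> * u2 x" for x
  have "(E has_real_derivative 0) (at x)" for x
  proof -
    have "(E has_real_derivative u x * u1 x - \<epsilon> * u2 x + \<delta> * u3 x) (at x)"
      unfolding E_def by (rule derivative_eq_intros d1 d2 d3 refl | simp)+
    then show ?thesis using ode2[of x] by simp
  qed
  then have Ec: "E x = E 0" for x by (meson DERIV_isconst_all)
  define L where "L = (E 0 - s\<^sup>2 / 2) / \<delta>"
  have u2eq: "u2 x = (E 0 - (u x)\<^sup>2 / 2 + \<epsilon> * u1 x) / \<delta>" for x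
    using Ec[of x] de unfolding E_def by (simp add: field_simps)
  have u2lim: "(u2 \<longlongrightarrow> L) at_top"
  proof -
    have "((\<lambda>x. (E 0 - (u x)\<^sup>2 / 2 + \<epsilon> * u1 x) / \<delta>) \<longlongrightarrow> (E 0 - (-s)\<^sup>2 / 2 + \<epsilon> * 0) / \<delta>) at_top"
      using ut u1t de unfolding u1_def by (intro tendsto_intros) auto
    moreover have "u2 = (\<lambda>x. (E 0 - (u x)\<^sup>2 / 2 + \<epsilon> * u1 x) / \<delta>)" using u2eq by blast
    ultimately show ?thesis unfolding L_def by simp
  qed
  have L0: "L = 0"
  proof (rule ccontr)
    assume "L \<noteq> 0"
    then have Lp: "\<bar>L\<bar> / 4 > 0" by simp
    have "\<forall>\<^sub>F x in at_top. dist (u2 x) L < \<bar>L\<bar> / 2"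
      using tendstoD[OF u2lim, of "\<bar>L\<bar>/2"] \<open>L \<noteq> 0\<close> by simp
    moreover have "\<forall>\<^sub>F x in at_top. dist (u1 x) 0 < \<bar>L\<bar> / 8"
      using tendstoD[OF u1t[folded u1_def], of "\<bar>L\<bar>/8"] \<open>L \<noteq> 0\<close> by simp
    ultimately have "\<forall>\<^sub>F x in at_top. dist (u2 x) L < \<bar>L\<bar> / 2 \<and> dist (u1 x) 0 < \<bar>L\<bar> / 8"
      by (rule eventually_conj)
    then obtain X where X: "\<And>x. x \<ge> X \<Longrightarrow> dist (u2 x) L < \<bar>L\<bar> / 2 \<and> dist (u1 x) 0 < \<bar>L\<bar> / 8"
      by (auto simp: eventually_at_top_linorder)
    have "\<exists>l z. X < z \<and> z < X + 1 \<and> DERIV u1 z :> l \<and> u1 (X+1) - u1 X = (X + 1 - X) * l"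
      by (rule MVT) (use d2 in \<open>auto intro: DERIV_continuous_on real_differentiable_def[THEN iffD2] DERIV_isCont continuous_at_imp_continuous_on\<close>)
    then obtain l z where z: "X < z" "DERIV u1 z :> l" "u1 (X+1) - u1 X = l" by auto
    have "l = u2 z" using z(2) d2 DERIV_unique by blast
    moreover have "\<bar>u2 z - L\<bar> < \<bar>L\<bar> / 2" "\<bar>u1 X\<bar> < \<bar>L\<bar> / 8" "\<bar>u1 (X+1)\<bar> < \<bar>L\<bar> / 8"
      using X[of z] X[of X] X[of "X+1"] z by (auto simp: dist_real_def)
    ultimately show False using z(3) by linarith
  qed
  have u2eq': "\<delta> * u2 x = \<epsilon> * u1 x + (s\<^sup>2 - (u x)\<^sup>2) / 2" for x
  proof -
    have "E 0 = s\<^sup>2 / 2" using L0 de unfolding L_def by simp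
    then show ?thesis using u2eq[of x] de by (simp add: field_simps)
  qed
  define w where "w x = s\<^sup>2 - (u x)\<^sup>2" for x
  have wnn: "0 \<le> w x" for x
  proof -
    have "(u x)\<^sup>2 \<le> s\<^sup>2" using bnd[of x] by (intro power2_le_iff_abs_le[THEN iffD2]) auto
    then show ?thesis by (simp add: w_def)
  qed
  have gen: "\<sigma> * (- \<epsilon> * u1 x - lam * w x) \<le> 0"
    if l0: "0 \<le> lam" and l1: "lam \<le> 1"
      and sg: "\<And>y. 0 \<le> \<sigma> * (w y * ((2 * lam * \<epsilon>\<^sup>2 - \<epsilon>\<^sup>2 - 4 * \<delta> * lam\<^sup>2 * u y) / (2 * \<delta> * \<epsilon>)))"
    for \<sigma> lam x
  proof -
    define a where "a y = \<epsilon> / \<delta> - 2 * lam * u y / \<epsilon>" for y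
    have ca: "isCont a y" for y unfolding a_def
      using d1 ep by (intro continuous_intros DERIV_isCont) (auto intro: DERIV_isCont)
    obtain A where dA: "\<And>y. (A has_real_derivative a y) (at y)"
      using antideriv_ex[OF ca] by blast
    have apos: "0 \<le> a y" for y
    proof -
      have "lam * u y \<le> s"
      proof (cases "u y \<ge> 0")
        case True then show ?thesis using bnd[of y] l0 l1
          by (metis mult_left_le_one_le mult_right_mono order.trans)
      next
        case False then show ?thesis using l0 sp mult_nonneg_nonpos[of lam "u y"] by linarith
      qed
      then have "2 * \<delta> * (lam * u y) \<le> 2 * \<delta> * s" using de by simp
      moreover have "0 < \<delta> * s" using sp de by simp
      ultimately have "0 \<le> \<epsilon>\<^sup>2 - 2 * \<delta> * (lam * u y)" using cond by linarith
      then have "0 \<le> (\<epsilon>\<^sup>2 - 2 * \<delta> * (lam * u y)) / (\<delta> * \<epsilon>)" using de ep by simp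
      also have "\<dots> = a y" unfolding a_def using de ep by (simp add: field_simps power2_eq_square)
      finally show ?thesis .
    qed
    define G where "G y = \<sigma> * (- \<epsilon> * u1 y - lam * w y)" for y
    define G' where "G' y = \<sigma> * (- \<epsilon> * u2 y + 2 * lam * u y * u1 y)" for y
    have dG: "(G has_real_derivative G' y) (at y)" for y
      unfolding G_def G'_def w_def
      by (rule derivative_eq_intros d1 d2 refl | simp add: algebra_simps)+
    have bid: "G' y - a y * G y = \<sigma> * (w y * ((2 * lam * \<epsilon>\<^sup>2 - \<epsilon>\<^sup>2 - 4 * \<delta> * lam\<^sup>2 * u y) / (2 * \<delta> * \<epsilon>)))" for y
    proof -
      have h: "u2 y = (\<epsilon> * u1 y + w y / 2) / \<delta>" using u2eq'[of y] de by (simp add: w_def field_simps)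
      show ?thesis unfolding G'_def G_def a_def h using de ep
        by (simp add: field_simps power2_eq_square)
    qed
    have lim: "(G \<longlongrightarrow> 0) at_top"
    proof -
      have "(G \<longlongrightarrow> \<sigma> * (- \<epsilon> * 0 - lam * (s\<^sup>2 - (-s)\<^sup>2))) at_top"
        unfolding G_def w_def using ut u1t unfolding u1_def by (intro tendsto_intros) auto
      then show ?thesis by simp
    qed
    have "0 \<le> G' y - a y * G y" for y using bid[of y] sg[of y] by simp
    then show ?thesis using key_neg[OF dG dA apos _ lim, of x] by (simp add: G_def)
  qed
  define l where "l = sqrt 2 - 1"
  have l2: "l\<^sup>2 = 1 - 2 * l" unfolding l_def by (simp add: power2_diff)
  have l0: "0 \<le> l" and l1: "l \<le> 1" unfolding l_def by (auto simp: real_le_lsqrt real_sqrt_le_iff)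
  show ?thesis
  proof
    fix x
    have up: "1 * (- \<epsilon> * u1 x - 1 * w x) \<le> 0"
    proof (rule gen)
      fix y
      have "\<delta> * u y \<le> \<delta> * s" using bnd[of y] de by (intro mult_left_mono) auto
      then have "0 \<le> \<epsilon>\<^sup>2 - 4 * \<delta> * u y" using cond by linarith
      then show "0 \<le> 1 * (w y * ((2 * 1 * \<epsilon>\<^sup>2 - \<epsilon>\<^sup>2 - 4 * \<delta> * 1\<^sup>2 * u y) / (2 * \<delta> * \<epsilon>)))"
        using wnn[of y] de ep by simp
    qed auto
    have lo: "(-1) * (- \<epsilon> * u1 x - l * w x) \<le> 0"
    proof (rule gen[OF l0 l1])
      fix y
      have "\<delta> * (-s) \<le> \<delta> * u y" using bnd[of y] de by (intro mult_left_mono) auto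
      then have "0 \<le> \<epsilon>\<^sup>2 + 4 * \<delta> * u y" using cond by linarith
      then have "0 \<le> l\<^sup>2 * (\<epsilon>\<^sup>2 + 4 * \<delta> * u y)" by simp
      also have "l\<^sup>2 * (\<epsilon>\<^sup>2 + 4 * \<delta> * u y) = - (2 * l * \<epsilon>\<^sup>2 - \<epsilon>\<^sup>2 - 4 * \<delta> * l\<^sup>2 * u y)"
        using arg_cong[OF l2, of "\<lambda>t. \<epsilon>\<^sup>2 * t"] by (simp add: algebra_simps)
      finally show "0 \<le> (-1) * (w y * ((2 * l * \<epsilon>\<^sup>2 - \<epsilon>\<^sup>2 - 4 * \<delta> * l\<^sup>2 * u y) / (2 * \<delta> * \<epsilon>)))"
        using wnn[of y] de ep by (simp add: mult_nonneg_nonpos divide_nonpos_pos)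
    qed
    have we: "w x = (s - u x) * (u x + s)" by (simp add: w_def algebra_simps power2_eq_square)
    show "(sqrt 2 - 1) * (s - u x) * (u x + s) \<le> - \<epsilon> * deriv u x
          \<and> - \<epsilon> * deriv u x \<le> 1 * (s - u x) * (u x + s)"
      using up lo we unfolding l_def u1_def by (simp add: algebra_simps)
  qed
qed

end
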